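(* Let $G=G_1\oplus G_2$ be a cograph, where $G_1,G_2$ are nonempty graphs on disjoint vertex sets. Then there is a spanning cactus subgraph $H$ of $G$ with the maximum number of edges (among all spanning cactus subgraphs of $G$) such that every cycle of $H$ is either a $C_3$ or a $C_4$ and contains at least one vertex of $V(G_1)$ and at least one vertex of $V(G_2)$.
   Context: All graphs are finite, simple and undirected. The join $G_1\oplus G_2$ of graphs with disjoint vertex sets has vertex set $V(G_1)\cup V(G_2)$ and edge set $E(G_1)\cup E(G_2)\cup\{uv: u\in V(G_1), v\in V(G_2)\}$. A cograph is a graph with no induced $P_4$ (path on 4 vertices). A cactus is a connected graph in which every edge lies in at most one cycle; a spanning cactus subgraph of $G$ is a subgraph with vertex set $V(G)$ that is a cactus. $C_k$ denotes the cycle on $k$ vertices. *)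

theory Defs
  imports Main
begin

definition simple_graph :: "'a set \<Rightarrow> 'a set set \<Rightarrow> bool" where
  "simple_graph V E \<longleftrightarrow> finite V \<and>
     (\<forall>e\<in>E. \<exists>u v. e = {u, v} \<and> u \<noteq> v \<and> u \<in> V \<and> v \<in> V)"

definition join_edges :: "'a set \<Rightarrow> 'a set set \<Rightarrow> 'a set \<Rightarrow> 'a set set \<Rightarrow> 'a set set" where
  "join_edges V1 E1 V2 E2 = E1 \<union> E2 \<union> {{u, v} | u v. u \<in> V1 \<and> v \<in> V2}"

definition cograph :: "'a set \<Rightarrow> 'a set set \<Rightarrow> bool" where
  "cograph V E \<longleftrightarrow> \<not> (\<exists>a b c d. a \<in> V \<and> b \<in> V \<and> c \<in> V \<and> d \<in> V \<and> distinct [a, b, c, d] \<and>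
      {a, b} \<in> E \<and> {b, c} \<in> E \<and> {c, d} \<in> E \<and>
      {a, c} \<notin> E \<and> {b, d} \<notin> E \<and> {a, d} \<notin> E)"

definition is_cycle :: "'a set set \<Rightarrow> 'a list \<Rightarrow> bool" where
  "is_cycle E cs \<longleftrightarrow> distinct cs \<and> length cs \<ge> 3 \<and>
     (\<forall>i < length cs. {cs ! i, cs ! ((i + 1) mod length cs)} \<in> E)"

definition cycle_edges :: "'a list \<Rightarrow> 'a set set" where
  "cycle_edges cs = {{cs ! i, cs ! ((i + 1) mod length cs)} | i. i < length cs}"

definition connected_graph :: "'a set \<Rightarrow> 'a set set \<Rightarrow> bool" where
  "connected_graph V E \<longleftrightarrow> V \<noteq> {} \<and>
     (\<forall>u\<in>V. \<forall>v\<in>V. (u, v) \<in> {(x, y). {x, y} \<in> E}\<^sup>*)"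

text \<open>Cactus: connected graph in which every edge lies in at most one cycle
  (cycles compared as subgraphs, i.e. via their edge sets).\<close>
definition cactus :: "'a set \<Rightarrow> 'a set set \<Rightarrow> bool" where
  "cactus V E \<longleftrightarrow> simple_graph V E \<and> connected_graph V E \<and>
     (\<forall>e\<in>E. \<forall>cs ds. is_cycle E cs \<and> is_cycle E ds \<and> e \<in> cycle_edges cs \<and> e \<in> cycle_edges ds
        \<longrightarrow> cycle_edges cs = cycle_edges ds)"

definition spanning_cactus :: "'a set \<Rightarrow> 'a set set \<Rightarrow> 'a set set \<Rightarrow> bool" where
  "spanning_cactus V E F \<longleftrightarrow> F \<subseteq> E \<and> cactus V F"

end

theory Submission
  imports Defs
begin

fun pe :: "'a list \<Rightarrow> 'a set set" where
  "pe (x # y # xs) = insert {x, y} (pe (y # xs))"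
| "pe _ = {}"

lemma pe_nth: "pe xs = {{xs ! i, xs ! Suc i} | i. Suc i < length xs}"
proof (induction xs rule: pe.induct)
  case (1 x y xs)
  have "{{(x#y#xs) ! i, (x#y#xs) ! Suc i} | i. Suc i < length (x#y#xs)}
      = insert {x,y} {{(y#xs) ! i, (y#xs) ! Suc i} | i. Suc i < length (y#xs)}"
    (is "?L = ?R")
  proof
    show "?L \<subseteq> ?R"
    proof
      fix e assume "e \<in> ?L"
      then obtain i where i: "e = {(x#y#xs) ! i, (x#y#xs) ! Suc i}" "Suc i < length (x#y#xs)" by blast
      show "e \<in> ?R"
      proof (cases i)
        case 0 then show ?thesis using i by simp
      next
        case (Suc j) then show ?thesis using i by auto
      qed
    qed
  next
    show "?R \<subseteq> ?L"
    proof
      fix e assume "e \<in> ?R"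
      then consider "e = {x,y}" | j where "e = {(y#xs) ! j, (y#xs) ! Suc j}" "Suc j < length (y#xs)" by blast
      then show "e \<in> ?L"
      proof cases
        case 1 then show ?thesis by (intro CollectI exI[of _ 0]) auto
      next
        case 2 then show ?thesis by (intro CollectI exI[of _ "Suc j"]) auto
      qed
    qed
  qed
  then show ?case using 1 by simp
next
  case ("2_1") then show ?case by simp
next
  case ("2_2" v) then show ?case by simp
qed

lemma pe_Cons: "xs \<noteq> [] \<Longrightarrow> pe (x # xs) = insert {x, hd xs} (pe xs)"
  by (cases xs) auto

lemma pe_append: "pe (xs @ y # ys) = pe (xs @ [y]) \<union> pe (y # ys)"
proof (induction xs)
  case Nil then show ?case by simp
next
  case (Cons a xs) then show ?case by (cases xs) auto
qed

lemma pe_snoc: "xs \<noteq> [] \<Longrightarrow> pe (xs @ [y]) = insert {last xs, y} (pe xs)"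
proof (induction xs)
  case Nil then show ?case by simp
next
  case (Cons a xs) then show ?case by (cases xs) auto
qed

lemma pe_mono_l: "pe xs \<subseteq> pe (xs @ ys)"
proof (induction xs rule: pe.induct)
  case (1 x y xs) then show ?case by auto
next
  case "2_1" then show ?case by simp
next
  case ("2_2" v) then show ?case by simp
qed

lemma pe_mono_r: "pe ys \<subseteq> pe (xs @ ys)"
proof (induction xs)
  case Nil then show ?case by simp
next
  case (Cons a xs) then show ?case by (cases "xs @ ys") auto
qed

lemma ce_pe: "cs \<noteq> [] \<Longrightarrow> cycle_edges cs = insert {last cs, hd cs} (pe cs)"
proof -
  assume ne: "cs \<noteq> []"
  let ?L = "length cs"
  have L: "?L > 0" using ne by simp
  show ?thesis unfolding cycle_edges_def pe_nth
  proof (intro equalityI subsetI)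
    fix e assume "e \<in> {{cs ! i, cs ! ((i + 1) mod ?L)} | i. i < ?L}"
    then obtain i where i: "e = {cs ! i, cs ! ((i + 1) mod ?L)}" "i < ?L" by blast
    show "e \<in> insert {last cs, hd cs} {{cs ! i, cs ! Suc i} | i. Suc i < ?L}"
    proof (cases "Suc i < ?L")
      case True then show ?thesis using i by auto
    next
      case False
      then have "i = ?L - 1" using i by simp
      then have "e = {last cs, hd cs}" using i ne by (simp add: last_conv_nth hd_conv_nth)
      then show ?thesis by simp
    qed
  next
    fix e assume "e \<in> insert {last cs, hd cs} {{cs ! i, cs ! Suc i} | i. Suc i < ?L}"
    then consider "e = {last cs, hd cs}" | i where "e = {cs ! i, cs ! Suc i}" "Suc i < ?L" by blast
    then show "e \<in> {{cs ! i, cs ! ((i + 1) mod ?L)} | i. i < ?L}"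
    proof cases
      case 1
      have "(?L - 1 + 1) mod ?L = 0" using L by simp
      then have "e = {cs ! (?L - 1), cs ! ((?L - 1 + 1) mod ?L)}" using 1 ne
        by (simp add: last_conv_nth hd_conv_nth)
      then show ?thesis using L by (intro CollectI exI[of _ "?L - 1"]) simp
    next
      case 2
      then have "e = {cs ! i, cs ! ((i + 1) mod ?L)}" by simp
      then show ?thesis using 2 by (intro CollectI exI[of _ i]) simp
    qed
  qed
qed

lemma ce_rotate1: "cycle_edges (rotate1 cs) = cycle_edges cs"
proof (cases cs)
  case Nil then show ?thesis by simp
next
  case (Cons x xs)
  show ?thesis
  proof (cases "xs = []")
    case True then show ?thesis using Cons by simp
  next
    case False
    have "cycle_edges (rotate1 cs) = insert {x, hd xs} (insert {last xs, x} (pe xs))"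
      using Cons False by (simp add: ce_pe pe_snoc insert_commute)
    moreover have "cycle_edges cs = insert {last xs, x} (insert {x, hd xs} (pe xs))"
      using Cons False by (simp add: ce_pe pe_Cons insert_commute doubleton_eq_iff)
    ultimately show ?thesis by (auto simp: insert_commute)
  qed
qed

lemma ce_rotate: "cycle_edges (rotate n cs) = cycle_edges cs"
  by (induction n) (auto simp: ce_rotate1)

lemma is_cycle_iff: "is_cycle E cs \<longleftrightarrow> distinct cs \<and> 3 \<le> length cs \<and> cycle_edges cs \<subseteq> E"
  unfolding is_cycle_def cycle_edges_def by blast

lemma is_cycle_rotate: "is_cycle E (rotate n cs) \<longleftrightarrow> is_cycle E cs"
  by (simp add: is_cycle_iff ce_rotate)

lemma is_cycle_mono: "is_cycle E cs \<Longrightarrow> E \<subseteq> F \<Longrightarrow> is_cycle F cs"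
  by (auto simp: is_cycle_iff)

lemma card_ce:
  assumes "distinct cs" "3 \<le> length cs"
  shows "card (cycle_edges cs) = length cs"
proof -
  let ?L = "length cs"
  let ?f = "\<lambda>i. {cs ! i, cs ! ((i + 1) mod ?L)}"
  have ce: "cycle_edges cs = ?f ` {..<?L}" unfolding cycle_edges_def by auto
  have "inj_on ?f {..<?L}"
  proof
    fix i j assume i: "i \<in> {..<?L}" and j: "j \<in> {..<?L}" and eq: "?f i = ?f j"
    have L0: "0 < ?L" using assms by linarith
    have im: "(i+1) mod ?L < ?L" "(j+1) mod ?L < ?L" using L0 by simp_all
    from eq have "(cs!i = cs!j \<and> cs!((i+1) mod ?L) = cs!((j+1) mod ?L)) \<or>
                  (cs!i = cs!((j+1) mod ?L) \<and> cs!((i+1) mod ?L) = cs!j)"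
      by (simp add: doubleton_eq_iff)
    then show "i = j"
    proof
      assume "cs!i = cs!j \<and> cs!((i+1) mod ?L) = cs!((j+1) mod ?L)"
      then show "i = j" using assms(1) i j by (simp add: nth_eq_iff_index_eq)
    next
      assume h: "cs!i = cs!((j+1) mod ?L) \<and> cs!((i+1) mod ?L) = cs!j"
      have a: "i = (j+1) mod ?L"
        using h assms(1) i im by (simp add: nth_eq_iff_index_eq)
      have b: "(i+1) mod ?L = j"
        using h assms(1) j im by (simp add: nth_eq_iff_index_eq)
      have "(j + 2) mod ?L = j" using a b by (simp add: mod_Suc_eq)
      moreover have "j < ?L" using j by simp
      ultimately show "i = j" using assms(2)
      proof -
        assume m: "(j + 2) mod ?L = j" "j < ?L" "3 \<le> ?L"
        show "i = j"
        proof (cases "j + 2 < ?L")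
          case True then show ?thesis using m by simp
        next
          case False
          have lt: "j + 2 - ?L < ?L" using m by linarith
          have "(j+2) mod ?L = j + 2 - ?L"
            using False lt by (subst mod_if) (simp add: mod_if)
          then show ?thesis using m False by linarith
        qed
      qed
    qed
  qed
  then show ?thesis using ce by (simp add: card_image)
qed


abbreviation rl :: "'a set set \<Rightarrow> ('a \<times> 'a) set" where
  "rl F \<equiv> {(x, y). {x, y} \<in> F}"

lemma rl_sym: "(x, y) \<in> (rl F)\<^sup>* \<Longrightarrow> (y, x) \<in> (rl F)\<^sup>*"
proof -
  have "sym (rl F)" by (auto simp: sym_def insert_commute)
  then have "sym ((rl F)\<^sup>*)" by (rule sym_rtrancl)
  then show "(x, y) \<in> (rl F)\<^sup>* \<Longrightarrow> (y, x) \<in> (rl F)\<^sup>*" by (auto simp: sym_def)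
qed

lemma rl_mono: "(x, y) \<in> (rl F)\<^sup>* \<Longrightarrow> F \<subseteq> F' \<Longrightarrow> (x, y) \<in> (rl F')\<^sup>*"
proof -
  assume a: "(x, y) \<in> (rl F)\<^sup>*" "F \<subseteq> F'"
  have "rl F \<subseteq> rl F'" using a(2) by auto
  then show ?thesis using a(1) rtrancl_mono by blast
qed

lemma rl_step: "{x, y} \<in> F \<Longrightarrow> (x, y) \<in> (rl F)\<^sup>*" by auto

lemma pe_walk: "pe p \<subseteq> A \<Longrightarrow> p \<noteq> [] \<Longrightarrow> (hd p, last p) \<in> (rl A)\<^sup>*"
proof (induction p rule: pe.induct)
  case (1 x y xs)
  then have "(y, last (y#xs)) \<in> (rl A)\<^sup>*" by simp
  moreover have "(x, y) \<in> rl A" using 1 by simp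
  ultimately show ?case by (simp add: converse_rtrancl_into_rtrancl)
qed auto

lemma walk_exists:
  assumes "(x, y) \<in> (rl A)\<^sup>*"
  shows "\<exists>p. p \<noteq> [] \<and> hd p = x \<and> last p = y \<and> pe p \<subseteq> A"
  using assms
proof (induction rule: rtrancl_induct)
  case base then show ?case by (intro exI[of _ "[x]"]) simp
next
  case (step y z)
  then obtain p where p: "p \<noteq> []" "hd p = x" "last p = y" "pe p \<subseteq> A" by blast
  have "pe (p @ [z]) \<subseteq> A" using p step(2) by (simp add: pe_snoc)
  then show ?case using p by (intro exI[of _ "p @ [z]"]) simp
qed

lemma pe_sub1: "pe (xs @ [y]) \<subseteq> pe (xs @ y # ys)"
  by (subst pe_append) (rule Un_upper1)

lemma pe_sub2: "pe (y # ys) \<subseteq> pe (xs @ y # ys)"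
  by (subst pe_append) (rule Un_upper2)

lemma set_ce: "\<Union>(cycle_edges cs) = set cs"
proof
  show "\<Union>(cycle_edges cs) \<subseteq> set cs"
  proof
    fix x assume "x \<in> \<Union>(cycle_edges cs)"
    then obtain i where i: "i < length cs" "x \<in> {cs ! i, cs ! ((i + 1) mod length cs)}"
      unfolding cycle_edges_def by blast
    have "0 < length cs" using i(1) by linarith
    then have "(i+1) mod length cs < length cs" by simp
    then show "x \<in> set cs" using i by auto
  qed
next
  show "set cs \<subseteq> \<Union>(cycle_edges cs)"
  proof
    fix x assume "x \<in> set cs"
    then obtain i where i: "i < length cs" "cs ! i = x" by (auto simp: in_set_conv_nth)
    have "{cs ! i, cs ! ((i + 1) mod length cs)} \<in> cycle_edges cs"
      unfolding cycle_edges_def using i(1) by blast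
    then show "x \<in> \<Union>(cycle_edges cs)" using i by blast
  qed
qed

lemma ce_eq:
  assumes "is_cycle E cs" "is_cycle F ds" "cycle_edges cs = cycle_edges ds"
  shows "length cs = length ds \<and> set cs = set ds"
  using assms card_ce[of cs] card_ce[of ds] set_ce[of cs] set_ce[of ds]
  by (auto simp: is_cycle_iff)

lemma ce_step: "Suc k < length ds \<Longrightarrow> {ds ! k, ds ! Suc k} \<in> cycle_edges ds"
  unfolding cycle_edges_def by (intro CollectI exI[of _ k]) simp

lemma ce_close: "ds \<noteq> [] \<Longrightarrow> {last ds, hd ds} \<in> cycle_edges ds"
  by (simp add: ce_pe)

lemma rot_hd: "t \<in> set cs \<Longrightarrow> \<exists>n. hd (rotate n cs) = t"
proof -
  assume "t \<in> set cs"
  then obtain i where i: "i < length cs" "cs ! i = t" by (auto simp: in_set_conv_nth)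
  have "cs \<noteq> []" using i by auto
  then have "hd (rotate i cs) = t" using hd_rotate_conv_nth[of cs i] i by simp
  then show ?thesis by blast
qed

lemma rot_edge:
  assumes "e \<in> cycle_edges cs"
  shows "\<exists>n. {last (rotate n cs), hd (rotate n cs)} = e"
proof -
  have ne: "cs \<noteq> []" using assms unfolding cycle_edges_def by auto
  from assms ne consider "e = {last cs, hd cs}" | "e \<in> pe cs" by (auto simp: ce_pe)
  then show ?thesis
  proof cases
    case 1 then show ?thesis by (intro exI[of _ 0]) simp
  next
    case 2
    then obtain i where i: "e = {cs ! i, cs ! Suc i}" "Suc i < length cs" by (auto simp: pe_nth)
    have r: "rotate (Suc i) cs = drop (Suc i) cs @ take (Suc i) cs"
      using i(2) by (simp add: rotate_drop_take)
    have tk: "take (Suc i) cs = take i cs @ [cs ! i]" using i(2) by (simp add: take_Suc_conv_app_nth)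
    have "hd (rotate (Suc i) cs) = cs ! Suc i" using i(2)
      by (simp only: r) (simp add: hd_drop_conv_nth)
    moreover have "last (rotate (Suc i) cs) = cs ! i"
      by (simp only: r tk) simp
    ultimately show ?thesis using i(1) by (intro exI[of _ "Suc i"]) (simp add: insert_commute)
  qed
qed

lemma cycle_deg:
  assumes "is_cycle E cs" "x \<in> set cs"
  shows "\<exists>y z. y \<noteq> z \<and> {x, y} \<in> E \<and> {x, z} \<in> E"
proof -
  obtain n where n: "hd (rotate n cs) = x" using rot_hd[OF assms(2)] by blast
  let ?r = "rotate n cs"
  have c: "is_cycle E ?r" using assms(1) is_cycle_rotate by blast
  then have d: "distinct ?r" "3 \<le> length ?r" "cycle_edges ?r \<subseteq> E" by (auto simp: is_cycle_iff)
  then obtain y rest where r: "?r = x # y # rest" using n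
    by (cases ?r; cases "tl ?r") auto
  have "rest \<noteq> []" using d(2) r by auto
  then have lz: "last ?r = last rest" using r by simp
  have "last rest \<in> set rest" using \<open>rest \<noteq> []\<close> by simp
  then have yz: "y \<noteq> last rest" using d(1) r by auto
  have "{x, y} \<in> cycle_edges ?r" using ce_step[of 0 ?r] d(2) r by simp
  moreover have "{last rest, x} \<in> cycle_edges ?r" using ce_close[of ?r] lz r by simp
  ultimately show ?thesis using d(3) yz by (intro exI[of _ y] exI[of _ "last rest"]) (auto simp: insert_commute)
qed

lemma ce_edge_distinct:
  assumes "distinct cs" "2 \<le> length cs" "e \<in> cycle_edges cs"
  shows "\<exists>x y. e = {x, y} \<and> x \<noteq> y \<and> x \<in> set cs \<and> y \<in> set cs"
proof -
  obtain i where i: "i < length cs" "e = {cs ! i, cs ! ((i + 1) mod length cs)}"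
    using assms(3) unfolding cycle_edges_def by blast
  have L0: "0 < length cs" using i(1) by linarith
  have m: "(i+1) mod length cs < length cs" using L0 by simp
  have "(i+1) mod length cs \<noteq> i"
  proof (cases "i + 1 < length cs")
    case True then show ?thesis by simp
  next
    case False then have "i + 1 = length cs" using i(1) by simp
    then show ?thesis using assms(2) by simp
  qed
  then have "cs ! i \<noteq> cs ! ((i + 1) mod length cs)"
    using assms(1) i(1) m by (simp add: nth_eq_iff_index_eq)
  then show ?thesis using i m by (intro exI[of _ "cs ! i"] exI[of _ "cs ! ((i + 1) mod length cs)"]) simp
qed


definition uniqc :: "'a set set \<Rightarrow> bool" where
  "uniqc H \<longleftrightarrow> (\<forall>e\<in>H. \<forall>cs ds. is_cycle H cs \<and> is_cycle H ds \<and> e \<in> cycle_edges cs \<and> e \<in> cycle_edges ds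
        \<longrightarrow> cycle_edges cs = cycle_edges ds)"

lemma uniqcD:
  assumes "uniqc H" "e \<in> H" "is_cycle H cs" "is_cycle H ds" "e \<in> cycle_edges cs" "e \<in> cycle_edges ds"
  shows "cycle_edges cs = cycle_edges ds"
  using assms unfolding uniqc_def by blast

lemma no_chord:
  assumes uq: "uniqc H" and cyc: "is_cycle H cs" and st: "s \<in> set cs" "t \<in> set cs" "s \<noteq> t"
  shows "(s, t) \<notin> (rl (H - cycle_edges cs))\<^sup>*"
proof
  assume reach: "(s, t) \<in> (rl (H - cycle_edges cs))\<^sup>*"
  define S where "S = set cs"
  define C where "C = cycle_edges cs"
  define A where "A = H - C"
  have AC: "A \<inter> C = {}" unfolding A_def by auto
  have CH: "C \<subseteq> H" using cyc unfolding C_def by (simp add: is_cycle_iff)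
  define P where "P n \<longleftrightarrow> (\<exists>s t mid. s \<in> S \<and> t \<in> S \<and> s \<noteq> t \<and> pe (s # mid @ [t]) \<subseteq> A \<and> length mid = n)" for n
  obtain p where p: "p \<noteq> []" "hd p = s" "last p = t" "pe p \<subseteq> A"
    using walk_exists[OF reach] unfolding A_def C_def by blast
  obtain q where q: "p = s # q" using p by (cases p) auto
  have "q \<noteq> []" using q p st(3) by auto
  then obtain mid where "q = mid @ [t]" using q p by (metis append_butlast_last_id last_ConsR)
  then have "P (length mid)" unfolding P_def using st p q unfolding S_def
    by (intro exI[of _ s] exI[of _ t] exI[of _ mid]) simp
  then obtain n where Pn: "P n" and minP: "\<And>m. m < n \<Longrightarrow> \<not> P m"
    using exists_least_iff[of P] by blast
  then obtain s' t' mid where m: "s' \<in> S" "t' \<in> S" "s' \<noteq> t'" "pe (s' # mid @ [t']) \<subseteq> A" "length mid = n"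
    unfolding P_def by blast
  have disj: "set mid \<inter> S = {}"
  proof (rule ccontr)
    assume "set mid \<inter> S \<noteq> {}"
    then obtain x where x: "x \<in> set mid" "x \<in> S" by blast
    then obtain m1 m2 where mm: "mid = m1 @ x # m2" by (meson split_list)
    have big: "pe ((s' # m1) @ x # (m2 @ [t'])) \<subseteq> A" using m(4) unfolding mm by simp
    show False
    proof (cases "x = s'")
      case False
      have "pe (s' # m1 @ [x]) \<subseteq> pe ((s' # m1) @ x # (m2 @ [t']))"
        using pe_sub1[of "s' # m1" x "m2 @ [t']"] by simp
      then have "pe (s' # m1 @ [x]) \<subseteq> A" using big by (rule subset_trans)
      then have "P (length m1)" unfolding P_def using m(1) x(2) False
        by (intro exI[of _ s'] exI[of _ x] exI[of _ m1]) simp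
      moreover have "length m1 < n" using m(5) mm by simp
      ultimately show False using minP by blast
    next
      case True
      have "pe (x # m2 @ [t']) \<subseteq> pe ((s' # m1) @ x # (m2 @ [t']))"
        by (rule pe_sub2)
      then have "pe (s' # m2 @ [t']) \<subseteq> A" using big True by auto
      then have "P (length m2)" unfolding P_def using m(1,2,3)
        by (intro exI[of _ s'] exI[of _ t'] exI[of _ m2]) simp
      moreover have "length m2 < n" using m(5) mm by simp
      ultimately show False using minP by blast
    qed
  qed
  have dmid: "distinct mid"
  proof (rule ccontr)
    assume "\<not> distinct mid"
    then obtain m1 y m2 m3 where mm: "mid = m1 @ [y] @ m2 @ [y] @ m3" using not_distinct_decomp by blast
    have e1: "pe (s' # m1 @ [y]) \<subseteq> pe ((s' # m1) @ y # (m2 @ y # m3 @ [t']))"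
      using pe_sub1[of "s' # m1" y "m2 @ y # m3 @ [t']"] by simp
    have e2: "pe (y # m3 @ [t']) \<subseteq> pe ((s' # m1 @ y # m2) @ y # (m3 @ [t']))"
      by (rule pe_sub2)
    have "pe (s' # m1 @ y # m3 @ [t']) = pe ((s' # m1) @ y # (m3 @ [t']))" by simp
    also have "\<dots> = pe (s' # m1 @ [y]) \<union> pe (y # m3 @ [t'])"
      using pe_append[of "s' # m1" y "m3 @ [t']"] by simp
    finally have "pe (s' # (m1 @ [y] @ m3) @ [t']) \<subseteq> A" using e1 e2 m(4) mm by auto
    then have "P (length (m1 @ [y] @ m3))" unfolding P_def using m(1,2,3)
        by (intro exI[of _ s'] exI[of _ t'] exI[of _ "m1 @ [y] @ m3"]) simp
    moreover have "length (m1 @ [y] @ m3) < n" using m(5) mm by simp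
    ultimately show False using minP by blast
  qed
  have "t' \<in> set cs" using m(2) unfolding S_def .
  then obtain k where k: "hd (rotate k cs) = t'" using rot_hd by metis
  define r where "r = rotate k cs"
  have cr: "is_cycle H r" unfolding r_def is_cycle_rotate by (rule cyc)
  have Cr: "cycle_edges r = C" unfolding r_def C_def by (simp add: ce_rotate)
  have Sr: "set r = S" unfolding r_def S_def by simp
  have dr: "distinct r" "3 \<le> length r" using cr by (auto simp: is_cycle_iff)
  have hr: "hd r = t'" using k unfolding r_def .
  obtain rest where r1: "r = t' # rest" using hr dr(2) by (cases r) auto
  have "s' \<in> set rest" using m(1,3) Sr r1 by auto
  then obtain ys zs where r2: "rest = ys @ s' # zs" by (meson split_list)
  define D where "D = t' # ys @ s' # mid"
  have peD: "pe D = pe (t' # ys @ [s']) \<union> pe (s' # mid)"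
    unfolding D_def using pe_append[of "t' # ys" s' mid] by simp
  have ceD: "cycle_edges D = pe (t' # ys @ [s']) \<union> pe (s' # mid @ [t'])"
  proof -
    have "cycle_edges D = insert {last (s' # mid), t'} (pe D)"
      unfolding D_def by (simp add: ce_pe)
    moreover have "pe (s' # mid @ [t']) = insert {last (s' # mid), t'} (pe (s' # mid))"
      using pe_snoc[of "s' # mid" t'] by simp
    ultimately show ?thesis using peD by auto
  qed
  have pc: "pe (t' # ys @ [s']) \<subseteq> C"
  proof -
    have "pe (t' # ys @ [s']) \<subseteq> pe ((t' # ys @ [s']) @ zs)" by (rule pe_mono_l)
    also have "\<dots> = pe r" using r1 r2 by simp
    also have "\<dots> \<subseteq> cycle_edges r" using r1 by (simp add: ce_pe) blast
    finally show ?thesis using Cr by simp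
  qed
  define e0 where "e0 = {t', hd (ys @ [s'])}"
  have e0: "e0 \<in> pe (t' # ys @ [s'])" unfolding e0_def by (simp add: pe_Cons)
  define e1 where "e1 = {s', hd (mid @ [t'])}"
  have e1: "e1 \<in> pe (s' # mid @ [t'])" unfolding e1_def by (simp add: pe_Cons)
  have dD: "distinct D"
  proof -
    have "distinct (t' # ys @ s' # zs)" using dr(1) r1 r2 by simp
    moreover have "set (t' # ys @ s' # zs) = S" using Sr r1 r2 by simp
    ultimately show ?thesis unfolding D_def using disj dmid by auto
  qed
  have lD: "3 \<le> length D"
  proof (rule ccontr)
    assume "\<not> 3 \<le> length D"
    moreover have "length D = 2 + length ys + length mid" unfolding D_def by simp
    ultimately have "length ys + length mid = 0" by linarith
    then have "ys = []" "mid = []" by simp_all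
    then have "{s', t'} \<in> A" "{t', s'} \<in> C" using m(4) pc by auto
    then show False using AC by (auto simp: insert_commute)
  qed
  have "cycle_edges D \<subseteq> H"
  proof -
    have "A \<subseteq> H" unfolding A_def by blast
    then show ?thesis using ceD pc m(4) CH by blast
  qed
  then have cD: "is_cycle H D"
    unfolding is_cycle_iff using dD lD by blast
  have "e0 \<in> H" using e0 pc CH by auto
  moreover have "e0 \<in> cycle_edges D" using e0 ceD by auto
  moreover have "e0 \<in> cycle_edges cs" using e0 pc unfolding C_def by auto
  ultimately have "cycle_edges D = cycle_edges cs" using uniqcD[OF uq _ cD cyc] by blast
  moreover have "e1 \<in> cycle_edges D" using e1 ceD by auto
  moreover have "e1 \<notin> cycle_edges cs" using e1 m(4) AC unfolding C_def by auto
  ultimately show False by simp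
qed

lemma reach_S:
  assumes "(u, x) \<in> (rl H)\<^sup>*" "u \<in> set cs"
  shows "\<exists>s\<in>set cs. (s, x) \<in> (rl (H - cycle_edges cs))\<^sup>*"
  using assms(1)
proof (induction rule: rtrancl_induct)
  case base then show ?case using assms(2) by blast
next
  case (step y z)
  then obtain s where s: "s \<in> set cs" "(s, y) \<in> (rl (H - cycle_edges cs))\<^sup>*" by blast
  show ?case
  proof (cases "{y, z} \<in> cycle_edges cs")
    case True
    have "z \<in> \<Union>(cycle_edges cs)" by (rule UnionI[OF True]) simp
    then have "z \<in> set cs" by (simp only: set_ce)
    then show ?thesis by blast
  next
    case False
    then have "(y, z) \<in> rl (H - cycle_edges cs)" using step(2) by simp
    then show ?thesis using s by (meson rtrancl.rtrancl_into_rtrancl)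
  qed
qed

lemma anchor:
  assumes nc: "\<forall>s\<in>S. \<forall>t\<in>S. s \<noteq> t \<longrightarrow> (s, t) \<notin> (rl A)\<^sup>*"
    and s0: "s0 \<in> S" "(s0, v) \<in> (rl A)\<^sup>*"
    and xy: "x \<in> (S - {s0}) \<union> {v}" "y \<in> (S - {s0}) \<union> {v}" "x \<noteq> y"
  shows "(x, y) \<notin> (rl A)\<^sup>*"
proof
  assume xyr: "(x, y) \<in> (rl A)\<^sup>*"
  have vs: "(v, s0) \<in> (rl A)\<^sup>*" using s0(2) by (rule rl_sym)
  show False
  proof (cases "x = v")
    case True
    then have yS: "y \<in> S" "y \<noteq> s0" using xy by auto
    have "(v, y) \<in> (rl A)\<^sup>*" using xyr True by simp
    then have "(s0, y) \<in> (rl A)\<^sup>*" using s0(2) by (rule rtrancl_trans[rotated])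
    then show False using nc s0(1) yS by auto
  next
    case False
    then have xS: "x \<in> S" "x \<noteq> s0" using xy by auto
    show False
    proof (cases "y = v")
      case True
      have "(x, v) \<in> (rl A)\<^sup>*" using xyr True by simp
      then have "(x, s0) \<in> (rl A)\<^sup>*" using vs by (rule rtrancl_trans)
      then show False using nc s0(1) xS by auto
    next
      case False
      then have "y \<in> S" using xy by auto
      then show False using nc xS xyr xy(3) by auto
    qed
  qed
qed

lemma cyc_split:
  assumes cyc: "is_cycle (A \<union> N) ds"
    and sep: "\<forall>x\<in>\<Union>N. \<forall>y\<in>\<Union>N. x \<noteq> y \<longrightarrow> (x, y) \<notin> (rl A)\<^sup>*"
  shows "cycle_edges ds \<subseteq> A \<or> cycle_edges ds \<subseteq> N"
proof (rule ccontr)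
  assume "\<not> ?thesis"
  then obtain e1 e2 where e1: "e1 \<in> cycle_edges ds" "e1 \<notin> A" and e2: "e2 \<in> cycle_edges ds" "e2 \<notin> N"
    by blast
  have CAN: "cycle_edges ds \<subseteq> A \<union> N" using cyc by (simp add: is_cycle_iff)
  have e1N: "e1 \<in> N" using e1 CAN by blast
  obtain n where n: "{last (rotate n ds), hd (rotate n ds)} = e1" using rot_edge[OF e1(1)] by blast
  define r where "r = rotate n ds"
  have cr: "is_cycle (A \<union> N) r" unfolding r_def is_cycle_rotate by (rule cyc)
  have Cr: "cycle_edges r = cycle_edges ds" unfolding r_def by (simp add: ce_rotate)
  have dr: "distinct r" "3 \<le> length r" using cr by (auto simp: is_cycle_iff)
  define L where "L = length r"
  have rne: "r \<noteq> []" using dr(2) by auto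
  define E where "E k = {r ! k, r ! Suc k}" for k
  have EC: "E k \<in> A \<union> N" if "Suc k < L" for k
    using ce_step[of k r] that CAN Cr unfolding E_def L_def by blast
  have "e2 \<noteq> {last r, hd r}" using n e1N e2 r_def by auto
  moreover have "cycle_edges r = insert {last r, hd r} (pe r)" by (rule ce_pe[OF rne])
  ultimately have "e2 \<in> pe r" using e2 Cr by blast
  then obtain j where j: "Suc j < L" "E j = e2" unfolding pe_nth E_def L_def by blast
  define a where "a = (LEAST i. Suc i < L \<and> E i \<notin> N)"
  have a: "Suc a < L \<and> E a \<notin> N"
  proof -
    have "Suc j < L \<and> E j \<notin> N" using j e2(2) by simp
    then show ?thesis unfolding a_def by (rule LeastI)
  qed
  have amin: "\<And>i. i < a \<Longrightarrow> E i \<in> N"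
  proof -
    fix i assume "i < a"
    then have "\<not> (Suc i < L \<and> E i \<notin> N)" unfolding a_def by (rule not_less_Least)
    then show "E i \<in> N" using \<open>i < a\<close> a by simp
  qed
  have ra: "r ! a \<in> \<Union>N"
  proof (cases a)
    case 0
    have "hd r = r ! 0" using rne by (simp add: hd_conv_nth)
    then show ?thesis using 0 n e1N r_def by auto
  next
    case (Suc a')
    then have "E a' \<in> N" using amin by simp
    then show ?thesis unfolding E_def using Suc by auto
  qed
  have lastN: "r ! (L - 1) \<in> \<Union>N" using n e1N rne unfolding r_def[symmetric] L_def
    by (auto simp: last_conv_nth)
  define b where "b = (LEAST i. a < i \<and> i < L \<and> r ! i \<in> \<Union>N)"
  have b: "a < b \<and> b < L \<and> r ! b \<in> \<Union>N"
  proof -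
    have "a < L - 1 \<and> L - 1 < L \<and> r ! (L - 1) \<in> \<Union>N" using a lastN by auto
    then show ?thesis unfolding b_def by (rule LeastI)
  qed
  have bmin: "\<And>i. a < i \<Longrightarrow> i < b \<Longrightarrow> r ! i \<notin> \<Union>N"
  proof -
    fix i assume "a < i" "i < b"
    from \<open>i < b\<close> have "\<not> (a < i \<and> i < L \<and> r ! i \<in> \<Union>N)" unfolding b_def by (rule not_less_Least)
    then show "r ! i \<notin> \<Union>N" using \<open>a < i\<close> \<open>i < b\<close> b by auto
  qed
  have EA: "E k \<in> A" if "a \<le> k" "k < b" for k
  proof (cases "k = a")
    case True then show ?thesis using a EC by blast
  next
    case False
    then have "a < k" using that by simp
    then have "r ! k \<notin> \<Union>N" using bmin that by simp
    then have "E k \<notin> N" unfolding E_def by auto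
    moreover have "Suc k < L" using that b by simp
    ultimately show ?thesis using EC by blast
  qed
  have "(r ! a, r ! k) \<in> (rl A)\<^sup>*" if "a \<le> k" "k \<le> b" for k
    using that(1,2)
  proof (induction k rule: dec_induct)
    case base then show ?case by simp
  next
    case (step m)
    then have "E m \<in> A" using EA by (simp add: Suc_le_lessD)
    then have 1: "(r ! m, r ! Suc m) \<in> rl A" unfolding E_def by simp
    have "m \<le> b" using step by simp
    then have "(r ! a, r ! m) \<in> (rl A)\<^sup>*" using step by simp
    then show ?case using 1 by (meson rtrancl.rtrancl_into_rtrancl)
  qed
  then have "(r ! a, r ! b) \<in> (rl A)\<^sup>*" using b by simp
  moreover have "r ! a \<noteq> r ! b" using dr(1) b unfolding L_def by (simp add: nth_eq_iff_index_eq)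
  ultimately show False using sep ra b by blast
qed


definition good :: "'a set \<Rightarrow> 'a set \<Rightarrow> 'a list \<Rightarrow> bool" where
  "good V1 V2 cs \<longleftrightarrow> (length cs = 3 \<or> length cs = 4) \<and> set cs \<inter> V1 \<noteq> {} \<and> set cs \<inter> V2 \<noteq> {}"

definition badset :: "'a set \<Rightarrow> 'a set \<Rightarrow> 'a set set \<Rightarrow> 'a set set set" where
  "badset V1 V2 F = {cycle_edges c | c. is_cycle F c \<and> \<not> good V1 V2 c}"

lemma cactus_iff: "cactus V F \<longleftrightarrow> simple_graph V F \<and> connected_graph V F \<and> uniqc F"
  unfolding cactus_def uniqc_def by simp

lemma simple_edge: "simple_graph V G \<Longrightarrow> e \<in> G \<Longrightarrow> \<exists>u v. e = {u, v} \<and> u \<noteq> v \<and> u \<in> V \<and> v \<in> V"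
  unfolding simple_graph_def by blast

lemma simple_sub_V: "simple_graph V G \<Longrightarrow> e \<in> G \<Longrightarrow> e \<subseteq> V"
  using simple_edge by fastforce

lemma simple_finite: "simple_graph V G \<Longrightarrow> finite G"
proof -
  assume sg: "simple_graph V G"
  then have "G \<subseteq> Pow V" using simple_sub_V by blast
  moreover have "finite V" using sg unfolding simple_graph_def by simp
  ultimately show ?thesis by (meson finite_Pow_iff finite_subset)
qed

lemma simple_mono: "simple_graph V G \<Longrightarrow> F \<subseteq> G \<Longrightarrow> simple_graph V F"
  unfolding simple_graph_def by blast

lemma cycle_set_V: "simple_graph V G \<Longrightarrow> is_cycle G cs \<Longrightarrow> set cs \<subseteq> V"
proof -
  assume sg: "simple_graph V G" and c: "is_cycle G cs"
  have "cycle_edges cs \<subseteq> G" using c by (simp add: is_cycle_iff)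
  then have "\<Union>(cycle_edges cs) \<subseteq> V" using simple_sub_V[OF sg] by blast
  then show ?thesis by (simp only: set_ce)
qed

lemma core_cycle:
  assumes ks: "distinct ks" "3 \<le> length ks"
    and c: "is_cycle (cycle_edges ks) ds" and l: "length ks \<le> length ds"
  shows "cycle_edges ds = cycle_edges ks \<and> set ds = set ks \<and> length ds = length ks"
proof -
  have d: "distinct ds" "3 \<le> length ds" "cycle_edges ds \<subseteq> cycle_edges ks" using c by (auto simp: is_cycle_iff)
  have "\<Union>(cycle_edges ds) \<subseteq> \<Union>(cycle_edges ks)" using d(3) by blast
  then have sub: "set ds \<subseteq> set ks" by (simp only: set_ce)
  have "card (set ds) \<le> card (set ks)" using sub by (simp add: card_mono)
  then have "length ds \<le> length ks" using d(1) ks(1) by (simp add: distinct_card)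
  then have le: "length ds = length ks" using l by simp
  then have "card (set ds) = card (set ks)" using d(1) ks(1) by (simp add: distinct_card)
  then have s: "set ds = set ks" using sub by (simp add: card_subset_eq)
  have "card (cycle_edges ds) = card (cycle_edges ks)"
    using card_ce[OF d(1,2)] card_ce[OF ks] le by simp
  moreover have "finite (cycle_edges ks)" unfolding cycle_edges_def by simp
  ultimately have "cycle_edges ds = cycle_edges ks" using d(3) by (simp add: card_subset_eq)
  then show ?thesis using s le by simp
qed

lemma cross_no_tri:
  assumes cr: "\<forall>e\<in>K. \<exists>x y. e = {x, y} \<and> (x \<in> X) \<noteq> (y \<in> X)"
    and c: "is_cycle K ds"
  shows "length ds \<noteq> 3"
proof
  assume l: "length ds = 3"
  have ce: "cycle_edges ds \<subseteq> K" using c by (simp add: is_cycle_iff)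
  have cr2: "(p \<in> X) \<noteq> (q \<in> X)" if pq: "{p, q} \<in> K" for p q
  proof -
    obtain x y where xy: "{p, q} = {x, y}" "(x \<in> X) \<noteq> (y \<in> X)" using cr pq by blast
    from xy(1) have "(p = x \<and> q = y) \<or> (p = y \<and> q = x)" by (simp add: doubleton_eq_iff)
    then show ?thesis using xy(2) by auto
  qed
  have ne: "ds \<noteq> []" using l by auto
  have "{ds ! 0, ds ! 1} \<in> K" using ce_step[of 0 ds] l ce by auto
  moreover have "{ds ! 1, ds ! 2} \<in> K" using ce_step[of 1 ds] l ce by (auto simp: numeral_2_eq_2)
  moreover have "{last ds, hd ds} \<in> K" using ce_close[OF ne] ce by auto
  moreover have "last ds = ds ! 2" using l ne by (simp add: last_conv_nth)
  moreover have "hd ds = ds ! 0" using ne by (simp add: hd_conv_nth)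
  ultimately have "{ds ! 0, ds ! 1} \<in> K" "{ds ! 1, ds ! 2} \<in> K" "{ds ! 2, ds ! 0} \<in> K" by simp_all
  then have "(ds ! 0 \<in> X) \<noteq> (ds ! 1 \<in> X)" "(ds ! 1 \<in> X) \<noteq> (ds ! 2 \<in> X)" "(ds ! 2 \<in> X) \<noteq> (ds ! 0 \<in> X)"
    using cr2 by blast+
  then show False by (cases "ds ! 0 \<in> X"; cases "ds ! 1 \<in> X") simp_all
qed

lemma cp_cycle:
  assumes RK: "R \<inter> \<Union>K = {}" and h: "\<forall>s\<in>R. h s \<in> \<Union>K"
    and c: "is_cycle (K \<union> (\<lambda>s. {h s, s}) ` R) ds"
  shows "is_cycle K ds"
proof -
  let ?N = "K \<union> (\<lambda>s. {h s, s}) ` R"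
  have nb: "y = h s" if sR: "s \<in> R" and sy: "{s, y} \<in> ?N" for s y
  proof -
    have "{s, y} \<notin> K" using sR RK by blast
    then have "{s, y} \<in> (\<lambda>s. {h s, s}) ` R" using sy by blast
    then obtain t where t: "t \<in> R" "{s, y} = {h t, t}" by blast
    have "h t \<in> \<Union>K" using h t(1) by blast
    then have "s \<noteq> h t" using sR RK by blast
    then have "s = t \<and> y = h t" using t(2) by (auto simp: doubleton_eq_iff)
    then show ?thesis by simp
  qed
  have disj: "set ds \<inter> R = {}"
  proof (rule ccontr)
    assume "set ds \<inter> R \<noteq> {}"
    then obtain s where s: "s \<in> set ds" "s \<in> R" by blast
    obtain y z where yz: "y \<noteq> z" "{s, y} \<in> ?N" "{s, z} \<in> ?N" using cycle_deg[OF c s(1)] by blast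
    have "y = h s" using nb[OF s(2) yz(2)] .
    moreover have "z = h s" using nb[OF s(2) yz(3)] .
    ultimately show False using yz(1) by simp
  qed
  have "cycle_edges ds \<subseteq> K"
  proof
    fix e assume e: "e \<in> cycle_edges ds"
    then have "e \<in> ?N" using c by (auto simp: is_cycle_iff)
    moreover have "e \<notin> (\<lambda>s. {h s, s}) ` R"
    proof
      assume "e \<in> (\<lambda>s. {h s, s}) ` R"
      then obtain t where t: "t \<in> R" "e = {h t, t}" by blast
      then have "t \<in> \<Union>(cycle_edges ds)" using e by blast
      then have "t \<in> set ds" by (simp only: set_ce)
      then show False using disj t(1) by blast
    qed
    ultimately show "e \<in> K" by blast
  qed
  then show ?thesis using c by (simp add: is_cycle_iff)
qed

lemma cp_card:
  assumes RK: "R \<inter> \<Union>K = {}" and h: "\<forall>s\<in>R. h s \<in> \<Union>K" and fin: "finite K" "finite R"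
  shows "card (K \<union> (\<lambda>s. {h s, s}) ` R) = card K + card R"
proof -
  have inj: "inj_on (\<lambda>s. {h s, s}) R"
  proof
    fix s t assume st: "s \<in> R" "t \<in> R" "{h s, s} = {h t, t}"
    have "h t \<in> \<Union>K" using h st(2) by blast
    then have "s \<noteq> h t" using st(1) RK by blast
    then show "s = t" using st(3) by (auto simp: doubleton_eq_iff)
  qed
  have dj: "K \<inter> (\<lambda>s. {h s, s}) ` R = {}"
  proof (rule ccontr)
    assume "K \<inter> (\<lambda>s. {h s, s}) ` R \<noteq> {}"
    then obtain s where "s \<in> R" "{h s, s} \<in> K" by blast
    then show False using RK by blast
  qed
  have "card (K \<union> (\<lambda>s. {h s, s}) ` R) = card K + card ((\<lambda>s. {h s, s}) ` R)"
    using fin dj by (simp add: card_Un_disjoint)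
  also have "\<dots> = card K + card R" using inj by (simp add: card_image)
  finally show ?thesis .
qed

lemma cp_vert:
  assumes h: "\<forall>s\<in>R. h s \<in> \<Union>K"
  shows "\<Union>(K \<union> (\<lambda>s. {h s, s}) ` R) = \<Union>K \<union> R"
  using h by blast


lemma repl:
  fixes V1 V2 :: "'a set"
  assumes sg: "simple_graph V G"
    and sc: "spanning_cactus V G H0"
    and cyc: "is_cycle H0 cs" and bad: "\<not> good V1 V2 cs"
    and NG: "N \<subseteq> G"
    and sepN: "\<forall>x\<in>\<Union>N. \<forall>y\<in>\<Union>N. x \<noteq> y \<longrightarrow> (x, y) \<notin> (rl (H0 - cycle_edges cs))\<^sup>*"
    and v0: "v0 \<in> \<Union>N" and conN: "\<forall>x\<in>\<Union>N. (v0, x) \<in> (rl N)\<^sup>*"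
    and cover: "\<forall>s\<in>set cs. \<exists>x\<in>\<Union>N. (s, x) \<in> (rl (H0 - cycle_edges cs))\<^sup>*"
    and Ncyc: "\<forall>ds. is_cycle N ds \<longrightarrow> cycle_edges ds = K \<and> good V1 V2 ds"
    and cardN: "length cs \<le> card N"
  shows "spanning_cactus V G (H0 - cycle_edges cs \<union> N) \<and> card H0 \<le> card (H0 - cycle_edges cs \<union> N)
         \<and> badset V1 V2 (H0 - cycle_edges cs \<union> N) \<subset> badset V1 V2 H0"
proof -
  define C where "C = cycle_edges cs"
  define A where "A = H0 - C"
  define H1 where "H1 = A \<union> N"
  have H0G: "H0 \<subseteq> G" and cH0: "cactus V H0" using sc unfolding spanning_cactus_def by auto
  have sH0: "simple_graph V H0" and conH0: "connected_graph V H0" and uH0: "uniqc H0"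
    using cH0 by (auto simp: cactus_iff)
  have finG: "finite G" using sg by (rule simple_finite)
  have finH0: "finite H0" using H0G finG finite_subset by blast
  have finN: "finite N" using NG finG finite_subset by blast
  have finA: "finite A" unfolding A_def using finH0 by simp
  have dc: "distinct cs" "3 \<le> length cs" "C \<subseteq> H0" using cyc unfolding C_def by (auto simp: is_cycle_iff)
  have AC: "A \<inter> C = {}" unfolding A_def by blast
  have AH0: "A \<subseteq> H0" unfolding A_def by blast
  have sepA: "\<forall>x\<in>\<Union>N. \<forall>y\<in>\<Union>N. x \<noteq> y \<longrightarrow> (x, y) \<notin> (rl A)\<^sup>*" using sepN unfolding A_def C_def .
  have AN: "A \<inter> N = {}"
  proof (rule ccontr)
    assume "A \<inter> N \<noteq> {}"
    then obtain e where e: "e \<in> A" "e \<in> N" by blast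
    then obtain u v where uv: "e = {u, v}" "u \<noteq> v" using simple_edge[OF sg] NG by blast
    have "u \<in> \<Union>N" "v \<in> \<Union>N" using e(2) uv(1) by blast+
    moreover have "(u, v) \<in> (rl A)\<^sup>*" using e(1) uv(1) by auto
    ultimately show False using sepA uv(2) by blast
  qed
  have H1G: "H1 \<subseteq> G" unfolding H1_def using AH0 H0G NG by blast
  have simp1: "simple_graph V H1" using simple_mono[OF sg H1G] .
  have Vne: "V \<noteq> {}" using conH0 unfolding connected_graph_def by simp
  have setV: "set cs \<subseteq> V" using cycle_set_V[OF sH0 cyc] .
  have c0: "hd cs \<in> set cs" using dc(2) by (cases cs) auto
  have AH1: "A \<subseteq> H1" and NH1: "N \<subseteq> H1" unfolding H1_def by blast+
  have conall: "\<forall>u\<in>V. \<forall>v\<in>V. (u, v) \<in> (rl H0)\<^sup>*" using conH0 unfolding connected_graph_def by simp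
  have hdV: "hd cs \<in> V" using c0 setV by blast
  have reach: "(v0, u) \<in> (rl H1)\<^sup>*" if u: "u \<in> V" for u
  proof -
    have "(hd cs, u) \<in> (rl H0)\<^sup>*" using bspec[OF bspec[OF conall hdV] u] .
    then have "\<exists>s\<in>set cs. (s, u) \<in> (rl (H0 - cycle_edges cs))\<^sup>*" using c0 by (rule reach_S)
    then obtain s where s: "s \<in> set cs" "(s, u) \<in> (rl A)\<^sup>*" unfolding A_def C_def by blast
    have "\<exists>x\<in>\<Union>N. (s, x) \<in> (rl A)\<^sup>*" using bspec[OF cover s(1)] unfolding A_def C_def .
    then obtain x where x: "x \<in> \<Union>N" "(s, x) \<in> (rl A)\<^sup>*" by blast
    have 1: "(v0, x) \<in> (rl H1)\<^sup>*" using rl_mono[OF bspec[OF conN x(1)] NH1] .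
    have "(x, s) \<in> (rl A)\<^sup>*" using x(2) by (rule rl_sym)
    then have 2: "(x, s) \<in> (rl H1)\<^sup>*" using AH1 by (rule rl_mono)
    have 3: "(s, u) \<in> (rl H1)\<^sup>*" using s(2) AH1 by (rule rl_mono)
    show ?thesis using rtrancl_trans[OF rtrancl_trans[OF 1 2] 3] .
  qed
  have con1: "connected_graph V H1"
    unfolding connected_graph_def
  proof (intro conjI ballI)
    show "V \<noteq> {}" by (rule Vne)
  next
    fix u w assume uw: "u \<in> V" "w \<in> V"
    have "(u, v0) \<in> (rl H1)\<^sup>*" using reach[OF uw(1)] by (rule rl_sym)
    moreover have "(v0, w) \<in> (rl H1)\<^sup>*" using reach[OF uw(2)] .
    ultimately show "(u, w) \<in> (rl H1)\<^sup>*" by (rule rtrancl_trans)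
  qed
  have split: "cycle_edges ds \<subseteq> A \<or> cycle_edges ds \<subseteq> N" if "is_cycle H1 ds" for ds
  proof -
    have "is_cycle (A \<union> N) ds" using that unfolding H1_def .
    then show ?thesis using sepA by (rule cyc_split)
  qed
  have inA: "is_cycle H0 ds" if "is_cycle H1 ds" "cycle_edges ds \<subseteq> A" for ds
    using that AH0 by (auto simp: is_cycle_iff)
  have inN: "is_cycle N ds" if "is_cycle H1 ds" "cycle_edges ds \<subseteq> N" for ds
    using that by (auto simp: is_cycle_iff)
  have u1: "uniqc H1"
    unfolding uniqc_def
  proof (intro ballI allI impI)
    fix e c1 c2
    assume e: "e \<in> H1" and h: "is_cycle H1 c1 \<and> is_cycle H1 c2 \<and> e \<in> cycle_edges c1 \<and> e \<in> cycle_edges c2"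
    then have h1: "is_cycle H1 c1" "is_cycle H1 c2" "e \<in> cycle_edges c1" "e \<in> cycle_edges c2" by auto
    consider "cycle_edges c1 \<subseteq> A" "cycle_edges c2 \<subseteq> A" | "cycle_edges c1 \<subseteq> N" "cycle_edges c2 \<subseteq> N"
      | "cycle_edges c1 \<subseteq> A" "cycle_edges c2 \<subseteq> N" | "cycle_edges c1 \<subseteq> N" "cycle_edges c2 \<subseteq> A"
      using split[OF h1(1)] split[OF h1(2)] by blast
    then show "cycle_edges c1 = cycle_edges c2"
    proof cases
      case 1
      have "e \<in> H0" using h1(3) 1(1) AH0 by blast
      then show ?thesis using uniqcD[OF uH0 _ inA[OF h1(1) 1(1)] inA[OF h1(2) 1(2)] h1(3,4)] by simp
    next
      case 2
      then show ?thesis using Ncyc inN[OF h1(1) 2(1)] inN[OF h1(2) 2(2)] by simp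
    next
      case 3 then show ?thesis using h1(3,4) AN by blast
    next
      case 4 then show ?thesis using h1(3,4) AN by blast
    qed
  qed
  have sc1: "spanning_cactus V G H1"
    unfolding spanning_cactus_def cactus_iff using H1G simp1 con1 u1 by blast
  have cardC: "card C = length cs" unfolding C_def using card_ce[OF dc(1,2)] .
  have finC: "finite C" unfolding C_def cycle_edges_def by simp
  have "card A = card H0 - card C" unfolding A_def using dc(3) finC by (simp add: card_Diff_subset)
  moreover have "card C \<le> card H0" using dc(3) finH0 by (simp add: card_mono)
  moreover have "card H1 = card A + card N" unfolding H1_def using finA finN AN by (simp add: card_Un_disjoint)
  ultimately have card1: "card H0 \<le> card H1" using cardN cardC by linarith
  have Cbad: "C \<in> badset V1 V2 H0" unfolding badset_def C_def using cyc bad by blast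
  have Cne: "C \<noteq> {}" using cardC dc(2) by auto
  have bsub: "badset V1 V2 H1 \<subseteq> badset V1 V2 H0 - {C}"
  proof
    fix X assume "X \<in> badset V1 V2 H1"
    then obtain c where c: "X = cycle_edges c" "is_cycle H1 c" "\<not> good V1 V2 c"
      unfolding badset_def by blast
    have "\<not> cycle_edges c \<subseteq> N" using c Ncyc inN by blast
    then have cA: "cycle_edges c \<subseteq> A" using split[OF c(2)] by blast
    then have "is_cycle H0 c" using inA c(2) by blast
    then have "X \<in> badset V1 V2 H0" unfolding badset_def using c by blast
    moreover have "X \<noteq> C" using cA c(1) AC Cne by blast
    ultimately show "X \<in> badset V1 V2 H0 - {C}" by blast
  qed
  then have "badset V1 V2 H1 \<subset> badset V1 V2 H0" using Cbad by blast
  then show ?thesis using sc1 card1 unfolding H1_def A_def C_def by simp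
qed


lemma join_cross: "x \<in> V1 \<Longrightarrow> y \<in> V2 \<Longrightarrow> {x, y} \<in> join_edges V1 E1 V2 E2"
  unfolding join_edges_def by (rule UnI2, rule CollectI, rule exI[of _ x], rule exI[of _ y]) simp

lemma join_cross': "x \<in> V1 \<union> V2 \<Longrightarrow> y \<in> V1 \<union> V2 \<Longrightarrow> (x \<in> V1) \<noteq> (y \<in> V1) \<Longrightarrow>
    {x, y} \<in> join_edges V1 E1 V2 E2"
proof -
  assume xy: "x \<in> V1 \<union> V2" "y \<in> V1 \<union> V2" "(x \<in> V1) \<noteq> (y \<in> V1)"
  show ?thesis
  proof (cases "x \<in> V1")
    case True
    then have "y \<notin> V1" using xy(3) by simp
    then have "y \<in> V2" using xy(2) by simp
    with True show ?thesis by (rule join_cross)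
  next
    case False
    then have "x \<in> V2" using xy(1) by simp
    moreover have "y \<in> V1" using False xy(3) by simp
    ultimately have "{y, x} \<in> join_edges V1 E1 V2 E2" by (intro join_cross)
    moreover have "{y, x} = {x, y}" by (rule insert_commute)
    ultimately show ?thesis by simp
  qed
qed

lemma ce3: "cycle_edges [a, b, c] = {{a, b}, {b, c}, {c, a}}"
  by (simp add: ce_pe insert_commute)

lemma ce4: "cycle_edges [a, b, c, d] = {{a, b}, {b, c}, {c, d}, {d, a}}"
  by (simp add: ce_pe insert_commute)

lemma tri:
  fixes V1 V2 :: "'a set"
  assumes sg: "simple_graph (V1 \<union> V2) (join_edges V1 E1 V2 E2)"
    and dj: "V1 \<inter> V2 = {}"
    and sc: "spanning_cactus (V1 \<union> V2) (join_edges V1 E1 V2 E2) H0"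
    and cyc: "is_cycle H0 cs" and bad: "\<not> good V1 V2 cs"
    and v: "v \<in> V2" and s0: "s0 \<in> set cs" "(s0, v) \<in> (rl (H0 - cycle_edges cs))\<^sup>*"
    and s12: "{s1, s2} \<in> cycle_edges cs" "s1 \<in> V1" "s2 \<in> V1" "s1 \<noteq> s2" "s1 \<noteq> s0" "s2 \<noteq> s0"
      "s1 \<in> set cs" "s2 \<in> set cs"
  shows "\<exists>H1. spanning_cactus (V1 \<union> V2) (join_edges V1 E1 V2 E2) H1 \<and> card H0 \<le> card H1
           \<and> badset V1 V2 H1 \<subset> badset V1 V2 H0"
proof -
  define G where "G = join_edges V1 E1 V2 E2"
  define V where "V = V1 \<union> V2"
  define A where "A = H0 - cycle_edges cs"
  define S where "S = set cs"
  have H0G: "H0 \<subseteq> G" and cH0: "cactus V H0" using sc unfolding spanning_cactus_def G_def V_def by auto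
  have uH0: "uniqc H0" using cH0 by (simp add: cactus_iff)
  have sH0: "simple_graph V H0" using cH0 by (simp add: cactus_iff)
  have nc: "\<forall>s\<in>S. \<forall>t\<in>S. s \<noteq> t \<longrightarrow> (s, t) \<notin> (rl A)\<^sup>*"
    using no_chord[OF uH0 cyc] unfolding A_def S_def by blast
  have dc: "distinct cs" "3 \<le> length cs" "cycle_edges cs \<subseteq> H0" using cyc by (auto simp: is_cycle_iff)
  have SV: "S \<subseteq> V" unfolding S_def V_def using cycle_set_V[OF sH0 cyc] unfolding V_def .
  have s0': "(s0, v) \<in> (rl A)\<^sup>*" using s0(2) unfolding A_def .
  have vS: "v \<notin> S - {s0}"
  proof
    assume "v \<in> S - {s0}"
    then show False using nc s0(1) s0' unfolding S_def by auto
  qed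
  have vs1: "v \<noteq> s1" "v \<noteq> s2" using v s12(2,3) dj by auto
  define ks where "ks = [v, s1, s2]"
  define K where "K = cycle_edges ks"
  have dks: "distinct ks" "3 \<le> length ks" unfolding ks_def using vs1 s12(4) by auto
  have Kex: "K = {{v, s1}, {s1, s2}, {s2, v}}" unfolding K_def ks_def by (rule ce3)
  have UK: "\<Union>K = {v, s1, s2}" unfolding Kex by auto
  define R where "R = S - {s0, s1, s2}"
  define h where "h s = (if s \<in> V1 then v else s1)" for s
  define N where "N = K \<union> (\<lambda>s. {h s, s}) ` R"
  have RK: "R \<inter> \<Union>K = {}" unfolding UK R_def using vS by auto
  have hK: "\<forall>s\<in>R. h s \<in> \<Union>K" unfolding UK h_def by auto
  have finR: "finite R" unfolding R_def S_def by simp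
  have finK: "finite K" unfolding Kex by simp
  have UN: "\<Union>N = {v, s1, s2} \<union> R" unfolding N_def using cp_vert[OF hK] UK by simp
  have NG: "N \<subseteq> G"
  proof -
    have "{v, s1} \<in> G" "{s2, v} \<in> G" unfolding G_def using join_cross[of _ V1 v V2] v s12(2,3)
      by (simp_all add: insert_commute)
    moreover have "{s1, s2} \<in> G" using s12(1) dc(3) H0G by blast
    moreover have "{h s, s} \<in> G" if "s \<in> R" for s
    proof -
      have "s \<in> V" using that SV unfolding R_def by blast
      then show ?thesis unfolding h_def G_def V_def using v s12(2) join_cross[of _ V1 _ V2]
        by (cases "s \<in> V1") (auto simp: insert_commute)
    qed
    ultimately show ?thesis unfolding N_def Kex by blast
  qed
  have sepN: "\<forall>x\<in>\<Union>N. \<forall>y\<in>\<Union>N. x \<noteq> y \<longrightarrow> (x, y) \<notin> (rl A)\<^sup>*"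
  proof (intro ballI impI)
    fix x y assume "x \<in> \<Union>N" "y \<in> \<Union>N" "x \<noteq> y"
    moreover have "\<Union>N \<subseteq> (S - {s0}) \<union> {v}" unfolding UN R_def S_def using s12 by auto
    ultimately show "(x, y) \<notin> (rl A)\<^sup>*" using anchor[OF nc _ s0'] s0(1) unfolding S_def by blast
  qed
  have vN: "v \<in> \<Union>N" unfolding UN by simp
  have e1: "{v, s1} \<in> N" "{s2, v} \<in> N" unfolding N_def Kex by auto
  have conN: "\<forall>x\<in>\<Union>N. (v, x) \<in> (rl N)\<^sup>*"
  proof
    fix x assume x: "x \<in> \<Union>N"
    have r1: "(v, s1) \<in> (rl N)\<^sup>*" using e1(1) by (rule rl_step)
    have r2: "(v, s2) \<in> (rl N)\<^sup>*" using rl_step[OF e1(2)] by (rule rl_sym)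
    consider "x = v" | "x = s1" | "x = s2" | "x \<in> R" using x unfolding UN by blast
    then show "(v, x) \<in> (rl N)\<^sup>*"
    proof cases
      case 4
      have "(v, h x) \<in> (rl N)\<^sup>*" unfolding h_def using r1 by simp
      moreover have "{h x, x} \<in> N" unfolding N_def using 4 by blast
      ultimately show ?thesis by (meson rtrancl.rtrancl_into_rtrancl case_prodI mem_Collect_eq)
    qed (use r1 r2 in simp_all)
  qed
  have cover: "\<forall>s\<in>set cs. \<exists>x\<in>\<Union>N. (s, x) \<in> (rl A)\<^sup>*"
  proof
    fix s assume s: "s \<in> set cs"
    show "\<exists>x\<in>\<Union>N. (s, x) \<in> (rl A)\<^sup>*"
    proof (cases "s = s0")
      case True then show ?thesis using vN s0' by blast
    next
      case False
      then have "s \<in> \<Union>N" unfolding UN R_def S_def using s by auto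
      then show ?thesis by blast
    qed
  qed
  have Ncyc: "\<forall>ds. is_cycle N ds \<longrightarrow> cycle_edges ds = K \<and> good V1 V2 ds"
  proof (intro allI impI)
    fix ds assume cN: "is_cycle N ds"
    have cK: "is_cycle K ds" using cp_cycle[OF RK hK] cN unfolding N_def by blast
    then have "3 \<le> length ds" by (simp add: is_cycle_iff)
    then have "length ks \<le> length ds" unfolding ks_def by simp
    then have cc: "cycle_edges ds = K \<and> set ds = set ks \<and> length ds = length ks"
      using core_cycle[OF dks, of ds] cK unfolding K_def by simp
    have "v \<in> set ds" "s1 \<in> set ds" using cc unfolding ks_def by simp_all
    then have "set ds \<inter> V2 \<noteq> {}" "set ds \<inter> V1 \<noteq> {}" using v s12(2) by blast+
    moreover have "length ds = 3" using cc unfolding ks_def by simp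
    ultimately have "good V1 V2 ds" unfolding good_def by simp
    then show "cycle_edges ds = K \<and> good V1 V2 ds" using cc by simp
  qed
  have cardN: "length cs \<le> card N"
  proof -
    have "card N = card K + card R" unfolding N_def using cp_card[OF RK hK finK finR] .
    moreover have "card K = 3" unfolding K_def using card_ce[OF dks] ks_def by simp
    moreover have "card R = card S - card {s0, s1, s2}" unfolding R_def
      using s0(1) s12(7,8) unfolding S_def by (intro card_Diff_subset) auto
    moreover have "card {s0, s1, s2} = 3" using s12(4,5,6) by auto
    moreover have "card S = length cs" unfolding S_def using dc(1) by (simp add: distinct_card)
    ultimately show ?thesis using dc(2) by linarith
  qed
  have "spanning_cactus V G (H0 - cycle_edges cs \<union> N) \<and> card H0 \<le> card (H0 - cycle_edges cs \<union> N)
         \<and> badset V1 V2 (H0 - cycle_edges cs \<union> N) \<subset> badset V1 V2 H0"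
    using repl[OF _ _ cyc bad NG _ vN conN _ Ncyc cardN] sg sc sepN cover
    unfolding G_def V_def A_def by blast
  then show ?thesis unfolding G_def V_def by blast
qed


lemma quad:
  fixes V1 V2 :: "'a set"
  assumes sg: "simple_graph (V1 \<union> V2) (join_edges V1 E1 V2 E2)"
    and dj: "V1 \<inter> V2 = {}"
    and sc: "spanning_cactus (V1 \<union> V2) (join_edges V1 E1 V2 E2) H0"
    and cyc: "is_cycle H0 cs" and bad: "\<not> good V1 V2 cs"
    and cross: "\<forall>p q. {p, q} \<in> cycle_edges cs \<longrightarrow> (p \<in> V1) \<noteq> (q \<in> V1)"
    and l4: "4 \<le> length cs"
  shows "\<exists>H1. spanning_cactus (V1 \<union> V2) (join_edges V1 E1 V2 E2) H1 \<and> card H0 \<le> card H1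
           \<and> badset V1 V2 H1 \<subset> badset V1 V2 H0"
proof -
  define G where "G = join_edges V1 E1 V2 E2"
  define V where "V = V1 \<union> V2"
  define A where "A = H0 - cycle_edges cs"
  define S where "S = set cs"
  have H0G: "H0 \<subseteq> G" and cH0: "cactus V H0" using sc unfolding spanning_cactus_def G_def V_def by auto
  have uH0: "uniqc H0" using cH0 by (simp add: cactus_iff)
  have sH0: "simple_graph V H0" using cH0 by (simp add: cactus_iff)
  have nc: "\<forall>s\<in>S. \<forall>t\<in>S. s \<noteq> t \<longrightarrow> (s, t) \<notin> (rl A)\<^sup>*"
    using no_chord[OF uH0 cyc] unfolding A_def S_def by blast
  have dc: "distinct cs" "3 \<le> length cs" "cycle_edges cs \<subseteq> H0" using cyc by (auto simp: is_cycle_iff)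
  have SV: "S \<subseteq> V" unfolding S_def V_def using cycle_set_V[OF sH0 cyc] unfolding V_def .
  obtain a b c d rest where cs: "cs = a # b # c # d # rest" using l4
    by (cases cs; cases "tl cs"; cases "tl (tl cs)"; cases "tl (tl (tl cs))") auto
  have abc: "{a, b} \<in> cycle_edges cs" "{b, c} \<in> cycle_edges cs" "{c, d} \<in> cycle_edges cs"
    using ce_step[of 0 cs] ce_step[of 1 cs] ce_step[of 2 cs] unfolding cs by (simp_all add: numeral_2_eq_2)
  have sd: "(a \<in> V1) \<noteq> (b \<in> V1)" "(b \<in> V1) \<noteq> (c \<in> V1)" "(c \<in> V1) \<noteq> (d \<in> V1)"
    using cross abc by blast+
  have sd2: "(d \<in> V1) \<noteq> (a \<in> V1)" using sd by blast
  have inS: "a \<in> S" "b \<in> S" "c \<in> S" "d \<in> S" unfolding S_def cs by simp_all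
  have inV: "a \<in> V" "b \<in> V" "c \<in> V" "d \<in> V" using inS SV by blast+
  define ks where "ks = [a, b, c, d]"
  define K where "K = cycle_edges ks"
  have dks: "distinct ks" "3 \<le> length ks" unfolding ks_def using dc(1) unfolding cs by auto
  have Kex: "K = {{a, b}, {b, c}, {c, d}, {d, a}}" unfolding K_def ks_def by (rule ce4)
  have UK: "\<Union>K = {a, b, c, d}" unfolding Kex by auto
  define R where "R = S - {a, b, c, d}"
  define h where "h s = (if (s \<in> V1) = (a \<in> V1) then b else a)" for s
  define N where "N = K \<union> (\<lambda>s. {h s, s}) ` R"
  have RK: "R \<inter> \<Union>K = {}" unfolding UK R_def by auto
  have hK: "\<forall>s\<in>R. h s \<in> \<Union>K" unfolding UK h_def by auto
  have finR: "finite R" unfolding R_def S_def by simp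
  have finK: "finite K" unfolding Kex by simp
  have UN: "\<Union>N = {a, b, c, d} \<union> R" unfolding N_def using cp_vert[OF hK] UK by simp
  have NG: "N \<subseteq> G"
  proof -
    have "{a, b} \<in> G" "{b, c} \<in> G" "{c, d} \<in> G" using abc dc(3) H0G by blast+
    moreover have "{d, a} \<in> G" unfolding G_def using join_cross'[of d V1 V2 a] inV sd2 unfolding V_def by blast
    moreover have "{h s, s} \<in> G" if "s \<in> R" for s
    proof -
      have sV: "s \<in> V" using that SV unfolding R_def by blast
      have "h s \<in> V" "(h s \<in> V1) \<noteq> (s \<in> V1)" unfolding h_def using inV sd(1) by auto
      then show ?thesis unfolding G_def using join_cross'[of "h s" V1 V2 s] sV unfolding V_def by blast
    qed
    ultimately show ?thesis unfolding N_def Kex by blast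
  qed
  have refl: "(a, a) \<in> (rl A)\<^sup>*" by simp
  have sepN: "\<forall>x\<in>\<Union>N. \<forall>y\<in>\<Union>N. x \<noteq> y \<longrightarrow> (x, y) \<notin> (rl A)\<^sup>*"
  proof (intro ballI impI)
    fix x y assume xy: "x \<in> \<Union>N" "y \<in> \<Union>N" "x \<noteq> y"
    have "\<Union>N \<subseteq> (S - {a}) \<union> {a}" unfolding UN R_def using inS by auto
    then show "(x, y) \<notin> (rl A)\<^sup>*" using anchor[OF nc inS(1) refl] xy by blast
  qed
  have aN: "a \<in> \<Union>N" unfolding UN by simp
  have e1: "{a, b} \<in> N" "{b, c} \<in> N" "{d, a} \<in> N" unfolding N_def Kex by auto
  have conN: "\<forall>x\<in>\<Union>N. (a, x) \<in> (rl N)\<^sup>*"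
  proof
    fix x assume x: "x \<in> \<Union>N"
    have r1: "(a, b) \<in> (rl N)\<^sup>*" using e1(1) by (rule rl_step)
    have r2: "(a, c) \<in> (rl N)\<^sup>*" using rtrancl_trans[OF r1 rl_step[OF e1(2)]] .
    have r3: "(a, d) \<in> (rl N)\<^sup>*" using rl_step[OF e1(3)] by (rule rl_sym)
    consider "x = a" | "x = b" | "x = c" | "x = d" | "x \<in> R" using x unfolding UN by blast
    then show "(a, x) \<in> (rl N)\<^sup>*"
    proof cases
      case 5
      have "(a, h x) \<in> (rl N)\<^sup>*" unfolding h_def using r1 by simp
      moreover have "{h x, x} \<in> N" unfolding N_def using 5 by blast
      ultimately show ?thesis by (meson rtrancl.rtrancl_into_rtrancl case_prodI mem_Collect_eq)
    qed (use r1 r2 r3 in simp_all)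
  qed
  have cover: "\<forall>s\<in>set cs. \<exists>x\<in>\<Union>N. (s, x) \<in> (rl A)\<^sup>*"
  proof
    fix s assume s: "s \<in> set cs"
    then have "s \<in> \<Union>N" unfolding UN R_def S_def by auto
    then show "\<exists>x\<in>\<Union>N. (s, x) \<in> (rl A)\<^sup>*" by blast
  qed
  have Kcross: "\<forall>e\<in>K. \<exists>x y. e = {x, y} \<and> (x \<in> V1) \<noteq> (y \<in> V1)"
    unfolding Kex using sd sd2 by blast
  have Ncyc: "\<forall>ds. is_cycle N ds \<longrightarrow> cycle_edges ds = K \<and> good V1 V2 ds"
  proof (intro allI impI)
    fix ds assume cN: "is_cycle N ds"
    have cK: "is_cycle K ds" using cp_cycle[OF RK hK] cN unfolding N_def by blast
    then have "3 \<le> length ds" by (simp add: is_cycle_iff)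
    moreover have "length ds \<noteq> 3" using cross_no_tri[OF Kcross cK] .
    ultimately have "length ks \<le> length ds" unfolding ks_def by simp
    then have cc: "cycle_edges ds = K \<and> set ds = set ks \<and> length ds = length ks"
      using core_cycle[OF dks, of ds] cK unfolding K_def by simp
    have ab: "a \<in> set ds" "b \<in> set ds" using cc unfolding ks_def by simp_all
    have "set ds \<inter> V2 \<noteq> {} \<and> set ds \<inter> V1 \<noteq> {}"
    proof (cases "a \<in> V1")
      case True
      then have "b \<in> V2" using sd(1) inV(2) unfolding V_def by auto
      then show ?thesis using ab True by blast
    next
      case False
      then have "a \<in> V2" "b \<in> V1" using sd(1) inV(1) unfolding V_def by auto
      then show ?thesis using ab by blast
    qed
    moreover have "length ds = 4" using cc unfolding ks_def by simp
    ultimately have "good V1 V2 ds" unfolding good_def by simp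
    then show "cycle_edges ds = K \<and> good V1 V2 ds" using cc by simp
  qed
  have cardN: "length cs \<le> card N"
  proof -
    have "card N = card K + card R" unfolding N_def using cp_card[OF RK hK finK finR] .
    moreover have "card K = 4" unfolding K_def using card_ce[OF dks] ks_def by simp
    moreover have "card R = card S - card {a, b, c, d}" unfolding R_def
      using inS by (intro card_Diff_subset) auto
    moreover have "card {a, b, c, d} = 4" using dks(1) unfolding ks_def by auto
    moreover have "card S = length cs" unfolding S_def using dc(1) by (simp add: distinct_card)
    ultimately show ?thesis using l4 by linarith
  qed
  have "spanning_cactus V G (H0 - cycle_edges cs \<union> N) \<and> card H0 \<le> card (H0 - cycle_edges cs \<union> N)
         \<and> badset V1 V2 (H0 - cycle_edges cs \<union> N) \<subset> badset V1 V2 H0"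
    using repl[OF _ _ cyc bad NG _ aN conN _ Ncyc cardN] sg sc sepN cover
    unfolding G_def V_def A_def by blast
  then show ?thesis unfolding G_def V_def by blast
qed


lemma join_sym: "join_edges V2 E2 V1 E1 = join_edges V1 E1 V2 E2"
proof -
  have "{{u, v} | u v. u \<in> V2 \<and> v \<in> V1} = {{u, v} | u v. u \<in> V1 \<and> v \<in> V2}"
  proof (intro equalityI subsetI)
    fix e assume "e \<in> {{u, v} | u v. u \<in> V2 \<and> v \<in> V1}"
    then obtain u v where "e = {u, v}" "u \<in> V2" "v \<in> V1" by blast
    then show "e \<in> {{u, v} | u v. u \<in> V1 \<and> v \<in> V2}"
      by (intro CollectI exI[of _ v] exI[of _ u]) (simp add: insert_commute)
  next
    fix e assume "e \<in> {{u, v} | u v. u \<in> V1 \<and> v \<in> V2}"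
    then obtain u v where "e = {u, v}" "u \<in> V1" "v \<in> V2" by blast
    then show "e \<in> {{u, v} | u v. u \<in> V2 \<and> v \<in> V1}"
      by (intro CollectI exI[of _ v] exI[of _ u]) (simp add: insert_commute)
  qed
  then show ?thesis unfolding join_edges_def by (simp add: Un_commute)
qed

lemma good_sym: "good V2 V1 cs = good V1 V2 cs"
  unfolding good_def by blast

lemma badset_sym: "badset V2 V1 H = badset V1 V2 H"
  unfolding badset_def good_sym[of V2 V1] by (rule refl)

lemma edge_mem:
  assumes "{s1, s2} \<in> cycle_edges cs" "distinct cs" "3 \<le> length cs"
  shows "s1 \<noteq> s2 \<and> s1 \<in> set cs \<and> s2 \<in> set cs"
proof -
  have l2: "2 \<le> length cs" using assms(3) by simp
  obtain x y where xy: "{s1, s2} = {x, y}" "x \<noteq> y" "x \<in> set cs" "y \<in> set cs"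
    using ce_edge_distinct[OF assms(2) l2 assms(1)] by blast
  from xy(1) have "(s1 = x \<and> s2 = y) \<or> (s1 = y \<and> s2 = x)" by (simp add: doubleton_eq_iff)
  then show ?thesis using xy(2,3,4) by auto
qed

lemma caseA:
  fixes V1 V2 :: "'a set"
  assumes sg: "simple_graph (V1 \<union> V2) (join_edges V1 E1 V2 E2)"
    and dj: "V1 \<inter> V2 = {}"
    and sc: "spanning_cactus (V1 \<union> V2) (join_edges V1 E1 V2 E2) H0"
    and cyc: "is_cycle H0 cs" and bad: "\<not> good V1 V2 cs"
    and V2ne: "V2 \<noteq> {}"
    and e: "{s1, s2} \<in> cycle_edges cs" "s1 \<in> V1" "s2 \<in> V1"
  shows "\<exists>H1. spanning_cactus (V1 \<union> V2) (join_edges V1 E1 V2 E2) H1 \<and> card H0 \<le> card H1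
           \<and> badset V1 V2 H1 \<subset> badset V1 V2 H0"
proof -
  have cH0: "cactus (V1 \<union> V2) H0" using sc unfolding spanning_cactus_def by auto
  have sH0: "simple_graph (V1 \<union> V2) H0" and conH0: "connected_graph (V1 \<union> V2) H0"
    using cH0 by (auto simp: cactus_iff)
  have dc: "distinct cs" "3 \<le> length cs" using cyc by (auto simp: is_cycle_iff)
  have SV: "set cs \<subseteq> V1 \<union> V2" using cycle_set_V[OF sH0 cyc] .
  have em: "s1 \<noteq> s2 \<and> s1 \<in> set cs \<and> s2 \<in> set cs" using edge_mem[OF e(1) dc] .
  show ?thesis
  proof (cases "set cs \<inter> V2 = {}")
    case False
    then obtain v where v: "v \<in> set cs" "v \<in> V2" by blast
    have "s1 \<noteq> v" "s2 \<noteq> v" using v(2) e(2,3) dj by auto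
    then show ?thesis
      using tri[OF sg dj sc cyc bad v(2) v(1) _ e(1,2,3)] em by simp
  next
    case True
    then have S1: "set cs \<subseteq> V1" using SV by blast
    obtain v where v: "v \<in> V2" using V2ne by blast
    have c0: "hd cs \<in> set cs" using dc(2) by (cases cs) auto
    have "hd cs \<in> V1 \<union> V2" "v \<in> V1 \<union> V2" using c0 SV v by auto
    then have "(hd cs, v) \<in> (rl H0)\<^sup>*" using conH0 unfolding connected_graph_def by blast
    then have "\<exists>s\<in>set cs. (s, v) \<in> (rl (H0 - cycle_edges cs))\<^sup>*" using c0 by (rule reach_S)
    then obtain s0 where s0: "s0 \<in> set cs" "(s0, v) \<in> (rl (H0 - cycle_edges cs))\<^sup>*" by blast
    obtain n where n: "hd (rotate n cs) = s0" using rot_hd[OF s0(1)] by blast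
    define r where "r = rotate n cs"
    have dr: "distinct r" "3 \<le> length r" unfolding r_def using dc by simp_all
    have hr: "hd r = s0" unfolding r_def using n .
    obtain x y rest where r: "r = s0 # x # y # rest" using dr(2) hr
      by (cases r; cases "tl r"; cases "tl (tl r)") auto
    have "{x, y} \<in> cycle_edges r" using ce_step[of 1 r] r by simp
    then have xy: "{x, y} \<in> cycle_edges cs" unfolding r_def by (simp add: ce_rotate)
    have sr: "set r = set cs" unfolding r_def by simp
    have xyS: "x \<in> set cs" "y \<in> set cs" using sr r by auto
    have "x \<noteq> y" "x \<noteq> s0" "y \<noteq> s0" using dr(1) r by auto
    moreover have "x \<in> V1" "y \<in> V1" using xyS S1 by auto
    ultimately show ?thesis
      using tri[OF sg dj sc cyc bad v s0 xy] xyS by simp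
  qed
qed

lemma step:
  fixes V1 V2 :: "'a set"
  assumes sg: "simple_graph (V1 \<union> V2) (join_edges V1 E1 V2 E2)"
    and dj: "V1 \<inter> V2 = {}" and V1ne: "V1 \<noteq> {}" and V2ne: "V2 \<noteq> {}"
    and sc: "spanning_cactus (V1 \<union> V2) (join_edges V1 E1 V2 E2) H0"
    and bs: "badset V1 V2 H0 \<noteq> {}"
  shows "\<exists>H1. spanning_cactus (V1 \<union> V2) (join_edges V1 E1 V2 E2) H1 \<and> card H0 \<le> card H1
           \<and> badset V1 V2 H1 \<subset> badset V1 V2 H0"
proof -
  obtain cs where cyc: "is_cycle H0 cs" and bad: "\<not> good V1 V2 cs"
    using bs unfolding badset_def by blast
  have cH0: "cactus (V1 \<union> V2) H0" using sc unfolding spanning_cactus_def by auto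
  have sH0: "simple_graph (V1 \<union> V2) H0" using cH0 by (auto simp: cactus_iff)
  have dc: "distinct cs" "3 \<le> length cs" using cyc by (auto simp: is_cycle_iff)
  have SV: "set cs \<subseteq> V1 \<union> V2" using cycle_set_V[OF sH0 cyc] .
  consider (A) s1 s2 where "{s1, s2} \<in> cycle_edges cs" "s1 \<in> V1" "s2 \<in> V1"
    | (B) s1 s2 where "{s1, s2} \<in> cycle_edges cs" "s1 \<in> V2" "s2 \<in> V2"
    | (C) "\<forall>p q. {p, q} \<in> cycle_edges cs \<longrightarrow> (p \<in> V1) \<noteq> (q \<in> V1)"
  proof -
    assume a: "\<And>s1 s2. {s1, s2} \<in> cycle_edges cs \<Longrightarrow> s1 \<in> V1 \<Longrightarrow> s2 \<in> V1 \<Longrightarrow> thesis"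
      and b: "\<And>s1 s2. {s1, s2} \<in> cycle_edges cs \<Longrightarrow> s1 \<in> V2 \<Longrightarrow> s2 \<in> V2 \<Longrightarrow> thesis"
      and c: "\<forall>p q. {p, q} \<in> cycle_edges cs \<longrightarrow> (p \<in> V1) \<noteq> (q \<in> V1) \<Longrightarrow> thesis"
    show thesis
    proof (cases "\<forall>p q. {p, q} \<in> cycle_edges cs \<longrightarrow> (p \<in> V1) \<noteq> (q \<in> V1)")
      case True then show ?thesis by (rule c)
    next
      case False
      then obtain p q where pq: "{p, q} \<in> cycle_edges cs" "(p \<in> V1) = (q \<in> V1)" by blast
      have "p \<in> set cs" "q \<in> set cs" using edge_mem[OF pq(1) dc] by simp_all
      then have "p \<in> V1 \<union> V2" "q \<in> V1 \<union> V2" using SV by auto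
      then show ?thesis using a b pq by (cases "p \<in> V1") auto
    qed
  qed
  then show ?thesis
  proof cases
    case A then show ?thesis using caseA[OF sg dj sc cyc bad V2ne] by blast
  next
    case B
    have sg': "simple_graph (V2 \<union> V1) (join_edges V2 E2 V1 E1)" using sg by (simp add: join_sym Un_commute)
    have sc': "spanning_cactus (V2 \<union> V1) (join_edges V2 E2 V1 E1) H0" using sc by (simp add: join_sym Un_commute)
    have dj': "V2 \<inter> V1 = {}" using dj by blast
    have bad': "\<not> good V2 V1 cs" using bad by (simp add: good_sym)
    obtain H1 where H1: "spanning_cactus (V2 \<union> V1) (join_edges V2 E2 V1 E1) H1" "card H0 \<le> card H1"
       "badset V2 V1 H1 \<subset> badset V2 V1 H0"
      using caseA[OF sg' dj' sc' cyc bad' V1ne B] by blast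
    have "spanning_cactus (V1 \<union> V2) (join_edges V1 E1 V2 E2) H1"
      using H1(1) by (simp add: join_sym Un_commute)
    moreover have "badset V1 V2 H1 \<subset> badset V1 V2 H0" using H1(3) by (simp add: badset_sym)
    ultimately show ?thesis using H1(2) by blast
  next
    case C
    have Kc: "\<forall>e\<in>cycle_edges cs. \<exists>x y. e = {x, y} \<and> (x \<in> V1) \<noteq> (y \<in> V1)"
    proof
      fix e assume e: "e \<in> cycle_edges cs"
      have l2: "2 \<le> length cs" using dc(2) by simp
      obtain x y where "e = {x, y}" using ce_edge_distinct[OF dc(1) l2 e] by blast
      then show "\<exists>x y. e = {x, y} \<and> (x \<in> V1) \<noteq> (y \<in> V1)" using C e by blast
    qed
    have "is_cycle (cycle_edges cs) cs" using dc by (simp add: is_cycle_iff)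
    then have "length cs \<noteq> 3" using cross_no_tri[OF Kc] by blast
    then have "4 \<le> length cs" using dc(2) by simp
    then show ?thesis using quad[OF sg dj sc cyc bad C] by blast
  qed
qed

lemma badset_finite:
  assumes "finite H" shows "finite (badset V1 V2 H)"
proof -
  have "badset V1 V2 H \<subseteq> Pow H" unfolding badset_def by (auto simp: is_cycle_iff)
  then show ?thesis using assms by (meson finite_Pow_iff finite_subset)
qed

lemma improve:
  fixes V1 V2 :: "'a set"
  assumes sg: "simple_graph (V1 \<union> V2) (join_edges V1 E1 V2 E2)"
    and dj: "V1 \<inter> V2 = {}" and V1ne: "V1 \<noteq> {}" and V2ne: "V2 \<noteq> {}"
  shows "spanning_cactus (V1 \<union> V2) (join_edges V1 E1 V2 E2) H0 \<Longrightarrow>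
     \<exists>H. spanning_cactus (V1 \<union> V2) (join_edges V1 E1 V2 E2) H \<and> card H0 \<le> card H \<and> badset V1 V2 H = {}"
proof (induction "card (badset V1 V2 H0)" arbitrary: H0 rule: less_induct)
  case less
  show ?case
  proof (cases "badset V1 V2 H0 = {}")
    case True then show ?thesis using less.prems by blast
  next
    case False
    obtain H1 where H1: "spanning_cactus (V1 \<union> V2) (join_edges V1 E1 V2 E2) H1" "card H0 \<le> card H1"
       "badset V1 V2 H1 \<subset> badset V1 V2 H0"
      using step[OF sg dj V1ne V2ne less.prems False] by blast
    have "finite (join_edges V1 E1 V2 E2)" using sg by (rule simple_finite)
    moreover have "H0 \<subseteq> join_edges V1 E1 V2 E2" using less.prems unfolding spanning_cactus_def by simp
    ultimately have "finite H0" using finite_subset by blast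
    then have "card (badset V1 V2 H1) < card (badset V1 V2 H0)"
      using H1(3) badset_finite psubset_card_mono by blast
    then obtain H where "spanning_cactus (V1 \<union> V2) (join_edges V1 E1 V2 E2) H" "card H1 \<le> card H"
        "badset V1 V2 H = {}"
      using less.hyps H1(1) by blast
    then show ?thesis using H1(2) by (intro exI[of _ H]) simp
  qed
qed


lemma join_simple:
  assumes "simple_graph V1 E1" "simple_graph V2 E2" "V1 \<inter> V2 = {}"
  shows "simple_graph (V1 \<union> V2) (join_edges V1 E1 V2 E2)"
  unfolding simple_graph_def
proof (intro conjI ballI)
  show "finite (V1 \<union> V2)" using assms(1,2) unfolding simple_graph_def by simp
next
  fix e assume "e \<in> join_edges V1 E1 V2 E2"
  then consider "e \<in> E1" | "e \<in> E2" | u v where "e = {u, v}" "u \<in> V1" "v \<in> V2"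
    unfolding join_edges_def by blast
  then show "\<exists>u v. e = {u, v} \<and> u \<noteq> v \<and> u \<in> V1 \<union> V2 \<and> v \<in> V1 \<union> V2"
  proof cases
    case 1 then show ?thesis using simple_edge[OF assms(1)] by blast
  next
    case 2 then show ?thesis using simple_edge[OF assms(2)] by blast
  next
    case 3
    then have "u \<noteq> v" using assms(3) by blast
    then show ?thesis using 3 by blast
  qed
qed

lemma exists_sc:
  fixes V1 V2 :: "'a set"
  assumes sg: "simple_graph (V1 \<union> V2) (join_edges V1 E1 V2 E2)"
    and dj: "V1 \<inter> V2 = {}" and u: "u \<in> V1" and w: "w \<in> V2"
  shows "\<exists>H. spanning_cactus (V1 \<union> V2) (join_edges V1 E1 V2 E2) H"
proof -
  define T where "T = {{u, y} | y. y \<in> V2} \<union> {{w, x} | x. x \<in> V1 - {u}}"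
  have TG: "T \<subseteq> join_edges V1 E1 V2 E2"
  proof
    fix e assume "e \<in> T"
    then consider y where "e = {u, y}" "y \<in> V2" | x where "e = {w, x}" "x \<in> V1 - {u}"
      unfolding T_def by blast
    then show "e \<in> join_edges V1 E1 V2 E2"
    proof cases
      case 1 then show ?thesis using join_cross[OF u 1(2)] by simp
    next
      case 2
      have "{x, w} \<in> join_edges V1 E1 V2 E2" using 2(2) w by (intro join_cross) auto
      then show ?thesis using 2(1) by (simp add: insert_commute)
    qed
  qed
  have sT: "simple_graph (V1 \<union> V2) T" using simple_mono[OF sg TG] .
  have uw: "{u, w} \<in> T" unfolding T_def using w by blast
  have reach: "(u, z) \<in> (rl T)\<^sup>*" if z: "z \<in> V1 \<union> V2" for z
  proof -
    consider "z = u" | "z \<in> V2" | "z \<in> V1 - {u}" using z by blast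
    then show ?thesis
    proof cases
      case 1 then show ?thesis by simp
    next
      case 2
      have "{u, z} \<in> T" unfolding T_def using 2 by blast
      then show ?thesis by (rule rl_step)
    next
      case 3
      have "{w, z} \<in> T" unfolding T_def using 3 by blast
      then show ?thesis using rtrancl_trans[OF rl_step[OF uw] rl_step] by blast
    qed
  qed
  have conT: "connected_graph (V1 \<union> V2) T"
    unfolding connected_graph_def
  proof (intro conjI ballI)
    show "V1 \<union> V2 \<noteq> {}" using u by blast
  next
    fix a b assume ab: "a \<in> V1 \<union> V2" "b \<in> V1 \<union> V2"
    have "(a, u) \<in> (rl T)\<^sup>*" using reach[OF ab(1)] by (rule rl_sym)
    then show "(a, b) \<in> (rl T)\<^sup>*" using reach[OF ab(2)] by (rule rtrancl_trans)
  qed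
  have nb1: "p = w" if z: "z \<in> V1 - {u}" and zp: "{z, p} \<in> T" for z p
  proof -
    consider y where "{z, p} = {u, y}" "y \<in> V2" | x where "{z, p} = {w, x}" "x \<in> V1 - {u}"
      using zp unfolding T_def by blast
    then show ?thesis
    proof cases
      case 1
      then have "(z = u \<and> p = y) \<or> (z = y \<and> p = u)" by (simp add: doubleton_eq_iff)
      then show ?thesis using z 1(2) dj by blast
    next
      case 2
      then have "(z = w \<and> p = x) \<or> (z = x \<and> p = w)" by (simp add: doubleton_eq_iff)
      then show ?thesis using z w dj by blast
    qed
  qed
  have nb2: "p = u" if z: "z \<in> V2 - {w}" and zp: "{z, p} \<in> T" for z p
  proof -
    consider y where "{z, p} = {u, y}" "y \<in> V2" | x where "{z, p} = {w, x}" "x \<in> V1 - {u}"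
      using zp unfolding T_def by blast
    then show ?thesis
    proof cases
      case 1
      then have "(z = u \<and> p = y) \<or> (z = y \<and> p = u)" by (simp add: doubleton_eq_iff)
      then show ?thesis using z u dj by blast
    next
      case 2
      then have "(z = w \<and> p = x) \<or> (z = x \<and> p = w)" by (simp add: doubleton_eq_iff)
      then show ?thesis using z 2(2) dj by blast
    qed
  qed
  have nocyc: "\<not> is_cycle T ds" for ds
  proof
    assume c: "is_cycle T ds"
    have sub: "set ds \<subseteq> {u, w}"
    proof
      fix z assume zd: "z \<in> set ds"
      obtain p q where pq: "p \<noteq> q" "{z, p} \<in> T" "{z, q} \<in> T" using cycle_deg[OF c zd] by blast
      have "z \<in> V1 \<union> V2" using cycle_set_V[OF sT c] zd by blast
      moreover have "z \<notin> V1 - {u}" using nb1[OF _ pq(2)] nb1[OF _ pq(3)] pq(1) by blast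
      moreover have "z \<notin> V2 - {w}" using nb2[OF _ pq(2)] nb2[OF _ pq(3)] pq(1) by blast
      ultimately show "z \<in> {u, w}" by blast
    qed
    have "card (set ds) \<le> card {u, w}" using sub by (simp add: card_mono)
    also have "\<dots> \<le> 2" by (simp add: card_insert_le_m1)
    finally have "card (set ds) \<le> 2" .
    moreover have "card (set ds) = length ds" using c by (simp add: is_cycle_iff distinct_card)
    moreover have "3 \<le> length ds" using c by (simp add: is_cycle_iff)
    ultimately show False by simp
  qed
  have "uniqc T" unfolding uniqc_def using nocyc by blast
  then have "spanning_cactus (V1 \<union> V2) (join_edges V1 E1 V2 E2) T"
    unfolding spanning_cactus_def cactus_iff using TG sT conT by blast
  then show ?thesis by blast
qed

theorem mainTheorem11:
  fixes V1 V2 :: "'a set" and E1 E2 :: "'a set set"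
  assumes "simple_graph V1 E1" and "simple_graph V2 E2"
    and "V1 \<inter> V2 = {}" and "V1 \<noteq> {}" and "V2 \<noteq> {}"
    and "cograph (V1 \<union> V2) (join_edges V1 E1 V2 E2)"
  shows "\<exists>H. spanning_cactus (V1 \<union> V2) (join_edges V1 E1 V2 E2) H \<and>
    (\<forall>H'. spanning_cactus (V1 \<union> V2) (join_edges V1 E1 V2 E2) H' \<longrightarrow> card H' \<le> card H) \<and>
    (\<forall>cs. is_cycle H cs \<longrightarrow> (length cs = 3 \<or> length cs = 4) \<and>
        set cs \<inter> V1 \<noteq> {} \<and> set cs \<inter> V2 \<noteq> {})"
proof -
  define G where "G = join_edges V1 E1 V2 E2"
  define V where "V = V1 \<union> V2"
  have sg: "simple_graph V G" unfolding V_def G_def using join_simple assms(1-3) by blast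
  obtain u w where u: "u \<in> V1" and w: "w \<in> V2" using assms(4,5) by blast
  define SC where "SC = {H. spanning_cactus V G H}"
  have finG: "finite G" using sg by (rule simple_finite)
  have "SC \<subseteq> Pow G" unfolding SC_def spanning_cactus_def by blast
  then have finSC: "finite SC" using finG by (meson finite_Pow_iff finite_subset)
  have neSC: "SC \<noteq> {}" unfolding SC_def V_def G_def
    using exists_sc[OF sg[unfolded V_def G_def] assms(3) u w] by blast
  define m where "m = Max (card ` SC)"
  have "m \<in> card ` SC" unfolding m_def using finSC neSC by simp
  then obtain H0 where H0: "H0 \<in> SC" "card H0 = m" by blast
  have mx: "card H' \<le> m" if "H' \<in> SC" for H'
    unfolding m_def using finSC that by simp
  obtain H where H: "spanning_cactus V G H" "card H0 \<le> card H" "badset V1 V2 H = {}"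
    using improve[OF sg[unfolded V_def G_def] assms(3,4,5)] H0(1) unfolding SC_def V_def G_def by blast
  have opt: "\<forall>H'. spanning_cactus V G H' \<longrightarrow> card H' \<le> card H"
    using mx H0(2) H(2) unfolding SC_def by fastforce
  have gd: "\<forall>cs. is_cycle H cs \<longrightarrow> good V1 V2 cs"
    using H(3) unfolding badset_def by blast
  show ?thesis using H(1) opt gd unfolding good_def V_def G_def by blast
qed

end
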